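(* For $n\ge0$ let $Q_n^L(x)=\sum_{r=0}^{n}\left[\binom{n}{r}\sum_{\ell=0}^{r}\binom{r}{\ell}\frac{1}{\ell!}\right](-x)^r$ (the coefficient polynomials of the linear transformation $x^n\mapsto L_n(x)$). Then for every $n$, all roots of $Q_n^L$ are real and lie in the open interval $(0,1)$, and the roots of $Q_n^L$ and $Q_{n+1}^L$ strictly interlace.
   Context: $L_n(x)=\sum_{k=0}^n\binom{n}{k}\frac{(-x)^k}{k!}$ is the $n$th Laguerre polynomial. Strict interlacing of the roots of a degree-$n$ polynomial and a degree-$(n+1)$ polynomial means their roots $s_1<\dots<s_{n+1}$ and $r_1<\dots<r_n$ are simple and satisfy $s_1<r_1<s_2<r_2<\cdots<r_n<s_{n+1}$. *)

theory Defs
  imports Complex_Main "HOL-Computational_Algebra.Polynomial"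
begin

definition QL :: "nat \<Rightarrow> real poly" where
  "QL n = (\<Sum>r\<le>n. monom (real (n choose r) * (\<Sum>l\<le>r. real (r choose l) / fact l) * (-1) ^ r) r)"

definition strictly_interlace :: "real poly \<Rightarrow> real poly \<Rightarrow> bool" where
  "strictly_interlace p q \<longleftrightarrow>
     (\<exists>rs ss. degree q = degree p + 1 \<and>
        length rs = degree p \<and> length ss = degree q \<and>
        sorted_wrt (<) rs \<and> sorted_wrt (<) ss \<and>
        set rs = {x. poly p x = 0} \<and> set ss = {x. poly q x = 0} \<and>
        (\<forall>x\<in>set rs. order x p = 1) \<and> (\<forall>x\<in>set ss. order x q = 1) \<and>
        (\<forall>i < length rs. ss ! i < rs ! i \<and> rs ! i < ss ! (i + 1)))"

end

theory Submission
  imports Defs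
begin


lemma binom_id:
  "(n+2) * (n+2 choose k) + (n+1) * (n choose k) = (2*n+3) * (n+1 choose k) + k * (n+1 choose (k-1))"
proof (cases k)
  case 0 then show ?thesis by simp
next
  case (Suc j)
  show ?thesis
  proof (cases "j \<le> n")
    case True
    then obtain m where m: "n = j + m" using le_Suc_ex by blast
    define A where "A = (n+1 choose (j+1))"
    define B where "B = (n+1 choose j)"
    define C where "C = (n choose (j+1))"
    define D where "D = (n choose j)"
    have e1: "(j+1) * A = (n+1) * D"
      using Suc_times_binomial_eq[of n j] by (simp add: mult.commute A_def D_def)
    have e2: "(m+1) * B = (n+1) * D"
      using binomial_absorb_comp[of "n+1" j] m by (simp add: B_def D_def)
    have e3: "m * A = (n+1) * C"
      using binomial_absorb_comp[of "n+1" "j+1"] m by (simp add: A_def C_def)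
    have e4: "(n+2 choose (j+1)) = A + B" by (simp add: A_def B_def)
    have "(n+2) * (A + B) + (n+1) * C = (2*n+3) * A + (j+1) * B"
    proof -
      have "(n+2) * (A + B) + (n+1) * C = (n+2)*A + (j+1)*B + (m+1)*B + m*A"
        using e3 m by (simp add: algebra_simps)
      also have "\<dots> = (n+2)*A + (j+1)*B + (j+1)*A + m*A" using e1 e2 by simp
      also have "\<dots> = (2*n+3) * A + (j+1) * B" using m by (simp add: algebra_simps)
      finally show ?thesis .
    qed
    then have "(n+2) * (n+2 choose (j+1)) + (n+1) * (n choose (j+1)) = (2*n+3) * (n+1 choose (j+1)) + (j+1) * (n+1 choose j)"
      unfolding e4 A_def B_def C_def .
    then show ?thesis unfolding Suc Suc_eq_plus1 by simp
  next
    case False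
    show ?thesis
    proof (cases "j = n+1")
      case True
      then show ?thesis using Suc by (simp del: binomial_Suc_Suc add: binomial_eq_0)
    next
      case False
      with \<open>\<not> j \<le> n\<close> have "n + 1 < j" by simp
      then show ?thesis using Suc by (simp del: binomial_Suc_Suc add: binomial_eq_0)
    qed
  qed
qed

definition Lg :: "nat \<Rightarrow> real \<Rightarrow> real" where
  "Lg n y = (\<Sum>k\<le>n. real (n choose k) / fact k * y^k)"

lemma Lg_ext: "m \<le> N \<Longrightarrow> Lg m y = (\<Sum>k\<le>N. real (m choose k) / fact k * y^k)"
  unfolding Lg_def
  by (rule sum.mono_neutral_left) (auto simp: binomial_eq_0)

lemma Lg_shift: "y * Lg (n+1) y = (\<Sum>k\<le>n+2. real k * real (n+1 choose (k-1)) / fact k * y^k)"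
proof -
  have "(\<Sum>k\<le>n+2. real k * real (n+1 choose (k-1)) / fact k * y^k)
      = (\<Sum>k\<le>n+1. real (Suc k) * real (n+1 choose k) / fact (Suc k) * y^(Suc k))"
  proof -
    have "n+2 = Suc (n+1)" by simp
    then show ?thesis using sum.atMost_Suc_shift[of "\<lambda>k. real k * real (n+1 choose (k-1)) / fact k * y^k" "n+1"]
      by simp
  qed
  also have "\<dots> = (\<Sum>k\<le>n+1. y * (real (n+1 choose k) / fact k * y^k))"
  proof (rule sum.cong[OF refl])
    fix k
    have "real (Suc k) \<noteq> 0" by simp
    then show "real (Suc k) * real (n+1 choose k) / fact (Suc k) * y^(Suc k) = y * (real (n+1 choose k) / fact k * y^k)"
      unfolding fact_Suc by (simp add: field_simps del: of_nat_Suc)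
  qed
  finally have eq: "(\<Sum>k\<le>n+2. real k * real (n+1 choose (k-1)) / fact k * y^k) = (\<Sum>k\<le>n+1. y * (real (n+1 choose k) / fact k * y^k))" .
  show ?thesis by (simp only: Lg_def sum_distrib_left eq)
qed

lemma aux_div: "((a::real)*(C1/f) + k*C2/f - b*(C0/f)) * z = (a*C1 + k*C2 - b*C0)/f * z"
  by (simp add: diff_divide_distrib add_divide_distrib)

lemma Lg_rec: "real (n+2) * Lg (n+2) y = (real (2*n+3) + y) * Lg (n+1) y - real (n+1) * Lg n y"
proof -
  have "(real (2*n+3) + y) * Lg (n+1) y - real (n+1) * Lg n y
     = real (2*n+3) * Lg (n+1) y + y * Lg (n+1) y - real (n+1) * Lg n y"
    by (simp add: algebra_simps)
  also have "\<dots> = (\<Sum>k\<le>n+2. (real (2*n+3) * (real (n+1 choose k) / fact k)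
        + real k * real (n+1 choose (k-1)) / fact k - real (n+1) * (real (n choose k) / fact k)) * y^k)"
  proof -
    have h1: "Lg (n+1) y = (\<Sum>k\<le>n+2. real (n+1 choose k) / fact k * y^k)" by (rule Lg_ext) simp
    have h0: "Lg n y = (\<Sum>k\<le>n+2. real (n choose k) / fact k * y^k)" by (rule Lg_ext) simp
    show ?thesis
      unfolding Lg_shift unfolding h1 h0 sum_distrib_left sum_subtractf[symmetric] sum.distrib[symmetric]
      by (rule sum.cong) (simp_all add: algebra_simps add_divide_distrib)
  qed
  also have "\<dots> = (\<Sum>k\<le>n+2. real (n+2) * (real (n+2 choose k) / fact k * y^k))"
  proof (rule sum.cong[OF refl])
    fix k
    have "real ((n+2) * (n+2 choose k) + (n+1) * (n choose k)) = real ((2*n+3) * (n+1 choose k) + k * (n+1 choose (k-1)))"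
      using binom_id[of n k] by metis
    then have "real (n+2) * real (n+2 choose k) = real (2*n+3) * real (n+1 choose k) + real k * real (n+1 choose (k-1)) - real (n+1) * real (n choose k)"
      unfolding of_nat_add of_nat_mult by linarith
    then show "(real (2*n+3) * (real (n+1 choose k) / fact k)
        + real k * real (n+1 choose (k-1)) / fact k - real (n+1) * (real (n choose k) / fact k)) * y^k
       = real (n+2) * (real (n+2 choose k) / fact k * y^k)"
      unfolding aux_div by simp
  qed
  finally have eq: "(real (2*n+3) + y) * Lg (n+1) y - real (n+1) * Lg n y = (\<Sum>k\<le>n+2. real (n+2) * (real (n+2 choose k) / fact k * y^k))" .
  show ?thesis by (simp only: Lg_def[of "n+2"] sum_distrib_left eq)
qed


definition F :: "nat \<Rightarrow> real \<Rightarrow> real" where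
  "F n x = (\<Sum>l\<le>n. real (n choose l) / fact l * (-x)^l * (1-x)^(n-l))"

lemma F_Lg:
  assumes "x \<noteq> 1"
  shows "F n x = (1-x)^n * Lg n (-x/(1-x))"
  unfolding F_def Lg_def sum_distrib_left
proof (rule sum.cong[OF refl])
  fix l assume "l \<in> {..n}"
  then have l: "l \<le> n" by simp
  have v: "1 - x \<noteq> 0" using assms by simp
  have e1: "(1-x)^n = (1-x)^l * (1-x)^(n-l)" using l by (simp flip: power_add)
  have e2: "(1-x) * (-x/(1-x)) = -x" using v by simp
  have "(1-x)^n * (real (n choose l) / fact l * (-x/(1-x))^l) = real (n choose l) / fact l * ((1-x) * (-x/(1-x)))^l * (1-x)^(n-l)"
    unfolding e1 power_mult_distrib by (simp only: mult_ac)
  then have H: "(1-x)^n * (real (n choose l) / fact l * (-x/(1-x))^l) = real (n choose l) / fact l * (-x)^l * (1-x)^(n-l)"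
    unfolding e2 .
  show "real (n choose l) / fact l * (-x)^l * (1-x)^(n-l) = (1-x)^n * (real (n choose l) / fact l * (-x/(1-x))^l)"
    by (rule H[symmetric])
qed

lemma F_one: "F n 1 = (-1)^n / fact n"
proof -
  have "F n 1 = (\<Sum>l\<le>n. if l = n then (-1)^n / fact n else 0)"
    unfolding F_def by (rule sum.cong) auto
  then show ?thesis by simp
qed

lemma F_zero: "F n 0 = 1"
proof -
  have "F n 0 = (\<Sum>l\<le>n. if l = 0 then 1 else 0)"
    unfolding F_def by (rule sum.cong) auto
  then show ?thesis by simp
qed

lemma F_rec: "real (n+2) * F (n+2) x = (real (2*n+3) - real (2*n+4) * x) * F (n+1) x - real (n+1) * (1-x)^2 * F n x"
proof (cases "x = 1")
  case True
  have f: "fact (Suc (Suc n)) = real (Suc (Suc n)) * (fact (Suc n) :: real)" by (rule fact_Suc)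
  have f2: "real (Suc (Suc n)) \<noteq> 0" "(fact (Suc n) :: real) \<noteq> 0" by simp_all
  have "real (Suc (Suc n)) * ((-1)^(Suc (Suc n)) / fact (Suc (Suc n))) = (-1)^n / (fact (Suc n) :: real)"
    unfolding f using f2 by simp
  moreover have "(real (2*n+3) - real (2*n+4) * 1) * ((-1)^(Suc n) / fact (Suc n)) = (-1)^n / (fact (Suc n) :: real)"
    by simp
  ultimately show ?thesis unfolding True F_one by (simp del: fact_Suc)
next
  case False
  define v where "v = 1 - x"
  define y where "y = -x/(1-x)"
  have v: "v \<noteq> 0" using False by (simp add: v_def)
  have yv1: "y * v = -x" using v by (simp add: y_def v_def)
  have yv0: "(a + y) * v = a * v - x" for a
    using yv1 by (simp add: algebra_simps)
  have yv: "(real (2*n+3) + y) * v = real (2*n+3) - real (2*n+4) * x"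
    unfolding yv0 by (simp add: v_def algebra_simps)
  have "real (n+2) * F (n+2) x = v^(n+2) * (real (n+2) * Lg (n+2) y)"
    unfolding F_Lg[OF False] v_def y_def by simp
  also have "\<dots> = v^(n+2) * ((real (2*n+3) + y) * Lg (n+1) y - real (n+1) * Lg n y)"
    by (simp only: Lg_rec)
  also have "\<dots> = ((real (2*n+3) + y) * v) * (v^(n+1) * Lg (n+1) y) - real (n+1) * v^2 * (v^n * Lg n y)"
    by (simp add: algebra_simps power_add power2_eq_square)
  also have "\<dots> = (real (2*n+3) - real (2*n+4) * x) * (v^(n+1) * Lg (n+1) y) - real (n+1) * v^2 * (v^n * Lg n y)"
    by (simp only: yv)
  also have "\<dots> = (real (2*n+3) - real (2*n+4) * x) * F (n+1) x - real (n+1) * (1-x)^2 * F n x"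
    unfolding F_Lg[OF False] v_def y_def by simp
  finally show ?thesis .
qed

lemma QL_F: "poly (QL n) x = F n x"
proof -
  have "poly (QL n) x = (\<Sum>r\<le>n. real (n choose r) * (\<Sum>l\<le>r. real (r choose l) / fact l) * (-x)^r)"
    unfolding QL_def poly_sum poly_monom power_minus[of x] by (simp add: mult.assoc)
  also have "\<dots> = (\<Sum>r\<le>n. \<Sum>l\<le>n. real (n choose r) * real (r choose l) / fact l * (-x)^r)"
  proof (rule sum.cong[OF refl])
    fix r assume "r \<in> {..n}"
    then have "(\<Sum>l\<le>r. real (r choose l) / fact l) = (\<Sum>l\<le>n. real (r choose l) / fact l)"
      by (intro sum.mono_neutral_left) (auto simp: binomial_eq_0)
    then show "real (n choose r) * (\<Sum>l\<le>r. real (r choose l) / fact l) * (-x)^r = (\<Sum>l\<le>n. real (n choose r) * real (r choose l) / fact l * (-x)^r)"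
      by (simp add: sum_distrib_left sum_distrib_right)
  qed
  also have "\<dots> = (\<Sum>l\<le>n. \<Sum>r\<le>n. real (n choose r) * real (r choose l) / fact l * (-x)^r)"
    by (rule sum.swap)
  also have "\<dots> = F n x"
    unfolding F_def
  proof (rule sum.cong[OF refl])
    fix l assume "l \<in> {..n}"
    then have l: "l \<le> n" by simp
    have "(\<Sum>r\<le>n. real (n choose r) * real (r choose l) / fact l * (-x)^r)
        = (\<Sum>r\<in>{l..n}. real (n choose r) * real (r choose l) / fact l * (-x)^r)"
      by (intro sum.mono_neutral_right) (auto simp: binomial_eq_0)
    also have "\<dots> = (\<Sum>r\<in>{l..n}. real (n choose l) / fact l * (real ((n-l) choose (r-l)) * (-x)^r))"
    proof (rule sum.cong[OF refl])
      fix r assume "r \<in> {l..n}"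
      then have "(n choose r) * (r choose l) = (n choose l) * ((n-l) choose (r-l))"
        by (intro choose_mult) auto
      then have "real (n choose r) * real (r choose l) = real (n choose l) * real ((n-l) choose (r-l))"
        by (metis of_nat_mult)
      then show "real (n choose r) * real (r choose l) / fact l * (-x)^r = real (n choose l) / fact l * (real ((n-l) choose (r-l)) * (-x)^r)"
        by simp
    qed
    also have "\<dots> = real (n choose l) / fact l * (\<Sum>r\<in>{l..n}. real ((n-l) choose (r-l)) * (-x)^r)"
      by (simp add: sum_distrib_left)
    also have "(\<Sum>r\<in>{l..n}. real ((n-l) choose (r-l)) * (-x)^r) = (\<Sum>j\<in>{0..n-l}. real ((n-l) choose j) * (-x)^(j+l))"
      using sum.shift_bounds_cl_nat_ivl[of "\<lambda>r. real ((n-l) choose (r-l)) * (-x)^r" 0 l "n-l"] l by simp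
    also have "\<dots> = (-x)^l * (\<Sum>j\<le>n-l. real ((n-l) choose j) * (-x)^j * 1^(n-l-j))"
      by (simp add: sum_distrib_left power_add atLeast0AtMost algebra_simps)
    also have "\<dots> = (-x)^l * (1-x)^(n-l)"
      using binomial_ring[of "-x" "1::real" "n-l"] by simp
    finally show "(\<Sum>r\<le>n. real (n choose r) * real (r choose l) / fact l * (-x)^r) = real (n choose l) / fact l * (-x)^l * (1-x)^(n-l)"
      by simp
  qed
  finally show ?thesis .
qed



lemma degree_QL: "degree (QL n) = n"
proof -
  have c: "coeff (QL n) k = (if k \<le> n then real (n choose k) * (\<Sum>l\<le>k. real (k choose l) / fact l) * (-1)^k else 0)" for k
    unfolding QL_def coeff_sum by (auto simp: sum.delta)
  have "degree (QL n) \<le> n" by (rule degree_le) (simp add: c)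
  moreover have "coeff (QL n) n \<noteq> 0"
  proof -
    have "(\<Sum>l\<le>n. real (n choose l) / fact l) \<ge> real (n choose 0) / fact 0"
      by (rule member_le_sum) auto
    then have "(\<Sum>l\<le>n. real (n choose l) / fact l) > 0" by simp
    then show ?thesis by (simp add: c)
  qed
  then have "n \<le> degree (QL n)" by (rule le_degree)
  ultimately show ?thesis by simp
qed

lemma QL_nz: "QL n \<noteq> 0"
proof
  assume "QL n = 0"
  then have "poly (QL n) 0 = 0" by simp
  then show False by (simp add: QL_F F_zero)
qed

lemma roots_all:
  fixes p :: "'a::idom poly"
  assumes "p \<noteq> 0" "distinct rs" "length rs = degree p" "\<forall>r\<in>set rs. poly p r = 0"
  shows "(\<forall>x. poly p x = 0 \<longleftrightarrow> x \<in> set rs) \<and> (\<forall>x\<in>set rs. order x p = 1)"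
  using assms
proof (induction rs arbitrary: p)
  case Nil
  then obtain a where pa: "p = [:a:]" using degree0_coeffs by force
  with Nil(1) have "a \<noteq> 0" by auto
  then show ?case using pa by simp
next
  case (Cons r rs)
  have "[:-r, 1:] dvd p" using Cons.prems(4) by (simp add: poly_eq_0_iff_dvd)
  then obtain q where pq: "p = [:-r, 1:] * q" by (elim dvdE)
  have q0: "q \<noteq> 0" using Cons.prems(1) pq by auto
  have dq: "degree p = degree q + 1" unfolding pq using q0 by (subst degree_mult_eq) auto
  have rq: "\<forall>x\<in>set rs. poly q x = 0"
  proof
    fix x assume x: "x \<in> set rs"
    then have "x \<noteq> r" using Cons.prems(2) by auto
    moreover have "poly p x = 0" using Cons.prems(4) x by simp
    ultimately show "poly q x = 0" unfolding pq by simp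
  qed
  have IH: "(\<forall>x. poly q x = 0 \<longleftrightarrow> x \<in> set rs) \<and> (\<forall>x\<in>set rs. order x q = 1)"
    using Cons.IH[OF q0] Cons.prems(2,3) rq dq by simp
  have r_notin: "r \<notin> set rs" using Cons.prems(2) by simp
  have lin1: "order r [:-r, 1:] = 1" using order_power_n_n[of r 1] by simp
  have roots: "\<forall>x. poly p x = 0 \<longleftrightarrow> x \<in> set (r # rs)"
    using IH unfolding pq by auto
  have ord: "\<forall>x\<in>set (r # rs). order x p = 1"
  proof
    fix x assume x: "x \<in> set (r # rs)"
    have om: "order x p = order x [:-r, 1:] + order x q" unfolding pq
      using Cons.prems(1) pq by (intro order_mult) simp
    show "order x p = 1"
    proof (cases "x = r")
      case True
      then have "order x q = 0" using IH r_notin by (intro order_0I) auto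
      then show ?thesis using lin1 True om by simp
    next
      case False
      then have "x \<in> set rs" using x by simp
      then have "order x q = 1" using IH by simp
      moreover have "order x [:-r, 1:] = 0" using False by (intro order_0I) simp
      ultimately show ?thesis using om by simp
    qed
  qed
  show ?case using roots ord by blast
qed

lemma poly_of_real_map: "poly (map_poly complex_of_real p) (complex_of_real x) = complex_of_real (poly p x)"
  by (induction p) (auto simp: map_poly_pCons)



definition Inv :: "nat \<Rightarrow> (nat \<Rightarrow> real) \<Rightarrow> (nat \<Rightarrow> real) \<Rightarrow> bool" where
  "Inv n r s \<longleftrightarrow>
     (\<forall>i<n. s i < s (Suc i)) \<and> 0 < s 0 \<and> s n < 1 \<and>
     (\<forall>i\<le>n. poly (QL (Suc n)) (s i) = 0) \<and>
     (\<forall>i<n. s i < r i \<and> r i < s (Suc i) \<and> poly (QL n) (r i) = 0) \<and>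
     (\<forall>i\<le>n. (-1)^i * poly (QL n) (s i) > 0) \<and>
     (\<forall>i<n. (-1)^(Suc i) * poly (QL (Suc n)) (r i) > 0)"

lemma mono_steps:
  fixes f :: "nat \<Rightarrow> real"
  assumes "\<forall>i<m. f i < f (Suc i)" "i < j" "j \<le> m"
  shows "f i < f j"
  using assms(2,3)
proof (induction j)
  case 0 then show ?case by simp
next
  case (Suc j)
  show ?case
  proof (cases "i = j")
    case True then show ?thesis using assms(1) Suc.prems by simp
  next
    case False
    then have "f i < f j" using Suc by simp
    also have "f j < f (Suc j)" using assms(1) Suc.prems by simp
    finally show ?thesis .
  qed
qed

lemma mono_steps_le:
  fixes f :: "nat \<Rightarrow> real"
  assumes "\<forall>i<m. f i < f (Suc i)" "i \<le> j" "j \<le> m"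
  shows "f i \<le> f j"
  using mono_steps[OF assms(1)] assms(2,3) by (cases "i = j") (auto intro: less_imp_le)

lemma sorted_map_upt:
  fixes f :: "nat \<Rightarrow> real"
  assumes "\<forall>i<m. f i < f (Suc i)"
  shows "sorted_wrt (<) (map f [0..<Suc m])"
  unfolding sorted_wrt_iff_nth_less using mono_steps[OF assms] by (auto simp del: upt_Suc)

lemma same_sign:
  fixes p :: "real poly"
  assumes "\<forall>x. a < x \<and> x < b \<longrightarrow> poly p x \<noteq> 0"
    "a \<le> c" "c \<le> b" "a \<le> d" "d \<le> b" "poly p c \<noteq> 0" "poly p d \<noteq> 0"
  shows "poly p c * poly p d > 0"
proof (rule ccontr)
  assume "\<not> poly p c * poly p d > 0"
  then have neg: "poly p c * poly p d < 0" using assms(6,7)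
    by (metis linorder_neqE_linordered_idom mult_eq_0_iff)
  have "c \<noteq> d" using neg by (metis not_square_less_zero)
  then consider "c < d" | "d < c" by linarith
  then show False
  proof cases
    case 1
    from poly_IVT[OF 1 neg] obtain x where "c < x" "x < d" "poly p x = 0" by blast
    then show False using assms by force
  next
    case 2
    from neg have "poly p d * poly p c < 0" by (simp add: mult.commute)
    from poly_IVT[OF 2 this] obtain x where "d < x" "x < c" "poly p x = 0" by blast
    then show False using assms by force
  qed
qed

lemma QL_zero: "poly (QL n) 0 = 1" by (simp add: QL_F F_zero)
lemma QL_one: "poly (QL n) 1 = (-1)^n / fact n" by (simp add: QL_F F_one)
lemma QL_0: "poly (QL 0) x = 1" by (simp add: QL_F F_def)
lemma QL_rec: "real (n+2) * poly (QL (n+2)) x = (real (2*n+3) - real (2*n+4) * x) * poly (QL (n+1)) x - real (n+1) * (1-x)^2 * poly (QL n) x"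
  by (simp only: QL_F F_rec)

lemma all_roots_s:
  assumes "\<forall>i<n. s i < s (Suc i)" "\<forall>i\<le>n. poly (QL (Suc n)) (s i) = 0"
  shows "(\<forall>x. poly (QL (Suc n)) x = 0 \<longleftrightarrow> (\<exists>i\<le>n. x = s i)) \<and> (\<forall>i\<le>n. order (s i) (QL (Suc n)) = 1)"
proof -
  have srt: "sorted_wrt (<) (map s [0..<Suc n])" by (rule sorted_map_upt[OF assms(1)])
  then have "distinct (map s [0..<Suc n])" by (simp add: strict_sorted_iff)
  moreover have "set (map s [0..<Suc n]) = s ` {..n}" by (simp add: atLeast0LessThan lessThan_Suc_atMost del: upt_Suc)
  ultimately have "(\<forall>x. poly (QL (Suc n)) x = 0 \<longleftrightarrow> x \<in> s ` {..n}) \<and> (\<forall>x\<in>s ` {..n}. order x (QL (Suc n)) = 1)"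
    using roots_all[OF QL_nz, of "map s [0..<Suc n]" "Suc n"] assms(2) by (simp add: degree_QL)
  then show ?thesis by auto
qed



lemma Inv_base: "\<exists>r s. Inv 0 r s"
proof -
  have "poly (QL 1) 0 > 0" by (simp add: QL_zero)
  moreover have "poly (QL 1) 1 < 0" by (simp add: QL_one)
  ultimately obtain t where t: "0 < t" "t < 1" "poly (QL 1) t = 0"
    using poly_IVT_neg[of 0 1 "QL 1"] by auto
  have "Inv 0 (\<lambda>_. 0) (\<lambda>_. t)" unfolding Inv_def using t by (simp add: QL_0)
  then show ?thesis by blast
qed

lemma Inv_step:
  assumes inv: "Inv n r s"
  shows "\<exists>u. Inv (Suc n) s u"
proof -
  have smono: "\<forall>i<n. s i < s (Suc i)" and s0: "0 < s 0" and sn: "s n < 1"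
    and sroot: "\<forall>i\<le>n. poly (QL (Suc n)) (s i) = 0"
    and rint: "\<forall>i<n. s i < r i \<and> r i < s (Suc i) \<and> poly (QL n) (r i) = 0"
    and ssign: "\<forall>i\<le>n. (-1)^i * poly (QL n) (s i) > 0"
    and rsign: "\<forall>i<n. (-1)^(Suc i) * poly (QL (Suc n)) (r i) > 0"
    using inv unfolding Inv_def by blast+
  have s_pos: "0 < s i" if "i \<le> n" for i
    using s0 mono_steps_le[OF smono, of 0 i] that by simp
  have s_lt1: "s i < 1" if "i \<le> n" for i
    using sn mono_steps_le[OF smono, of i n] that by simp
  have allr: "\<forall>x. poly (QL (Suc n)) x = 0 \<longleftrightarrow> (\<exists>i\<le>n. x = s i)"
    using all_roots_s[OF smono sroot] by blast
  have g: "\<And>(c::real) Y k. (-1)^(Suc k) * (- (c * Y)) = c * ((-1)^k * Y)" by simp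
  have a: "(-1)^(Suc i) * poly (QL (Suc (Suc n))) (s i) > 0" if i: "i \<le> n" for i
  proof -
    have "real (n+2) * poly (QL (n+2)) (s i) = - (real (n+1) * (1 - s i)^2 * poly (QL n) (s i))"
      using QL_rec[of n "s i"] sroot i by simp
    then have e: "poly (QL (Suc (Suc n))) (s i) = - (real (n+1) / real (n+2) * (1 - s i)^2 * poly (QL n) (s i))"
      by (simp add: field_simps)
    have eq: "(-1)^(Suc i) * poly (QL (Suc (Suc n))) (s i) = (real (n+1) / real (n+2) * (1 - s i)^2) * ((-1)^i * poly (QL n) (s i))"
      unfolding e by (rule g)
    have C: "real (n+1) / real (n+2) * (1 - s i)^2 > 0" using s_lt1[OF i] by simp
    have Y: "(-1)^i * poly (QL n) (s i) > 0" using ssign i by blast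
    show ?thesis unfolding eq using C Y by (rule mult_pos_pos)
  qed
  define p where "p j = (if j = 0 then 0 else if j \<le> Suc n then s (j - 1) else 1)" for j
  have psign: "(-1)^j * poly (QL (Suc (Suc n))) (p j) > 0" if jle: "j \<le> Suc (Suc n)" for j
  proof -
    consider "j = 0" | "0 < j" "j \<le> Suc n" | "j = Suc (Suc n)" using jle by (metis le_SucE neq0_conv)
    then show ?thesis
    proof cases
      case 1 then show ?thesis by (simp add: p_def QL_zero)
    next
      case 2
      then obtain i where "j = Suc i" "i \<le> n" by (metis Suc_le_mono gr0_implies_Suc)
      then show ?thesis using a[of i] by (simp add: p_def)
    next
      case 3 then show ?thesis by (simp add: p_def QL_one)
    qed
  qed
  have pmono: "p j < p (Suc j)" if jle: "j \<le> Suc n" for j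
  proof -
    consider "j = 0" | "0 < j" "j \<le> n" | "j = Suc n" using jle by (metis le_SucE neq0_conv)
    then show ?thesis
    proof cases
      case 1 then show ?thesis using s0 by (simp add: p_def)
    next
      case 2
      then obtain i where "j = Suc i" "i < n" by (metis Suc_le_eq gr0_implies_Suc)
      then show ?thesis using smono by (simp add: p_def)
    next
      case 3 then show ?thesis using sn by (simp add: p_def)
    qed
  qed
  have exu: "\<exists>t. p j < t \<and> t < p (Suc j) \<and> poly (QL (Suc (Suc n))) t = 0" if "j \<le> Suc n" for j
  proof -
    have h1: "(-1)^j * poly (QL (Suc (Suc n))) (p j) > 0" using psign that by simp
    have h2: "(-1)^(Suc j) * poly (QL (Suc (Suc n))) (p (Suc j)) > 0" using psign[of "Suc j"] that by simp
    have "((-1)^j * poly (QL (Suc (Suc n))) (p j)) * ((-1)^(Suc j) * poly (QL (Suc (Suc n))) (p (Suc j))) > 0"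
      using mult_pos_pos[OF h1 h2] .
    moreover have "((-1)^j * poly (QL (Suc (Suc n))) (p j)) * ((-1)^(Suc j) * poly (QL (Suc (Suc n))) (p (Suc j)))
       = - (((-1)^j * (-1)^j) * (poly (QL (Suc (Suc n))) (p j) * poly (QL (Suc (Suc n))) (p (Suc j))))"
      by (simp only: power_Suc) (simp add: mult_ac)
    moreover have "((-1::real)^j * (-1)^j) = 1" by (simp flip: power_add)
    ultimately have "0 < - (poly (QL (Suc (Suc n))) (p j) * poly (QL (Suc (Suc n))) (p (Suc j)))"
      by (metis mult_1)
    then have "poly (QL (Suc (Suc n))) (p j) * poly (QL (Suc (Suc n))) (p (Suc j)) < 0"
      by (simp only: neg_0_less_iff_less)
    from poly_IVT[OF pmono[OF that] this] show ?thesis by blast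
  qed
  obtain u where u: "\<And>j. j \<le> Suc n \<Longrightarrow> p j < u j \<and> u j < p (Suc j) \<and> poly (QL (Suc (Suc n))) (u j) = 0"
    using exu by metis
  have u1: "\<forall>i<Suc n. u i < u (Suc i)"
  proof (intro allI impI)
    fix i assume "i < Suc n"
    then show "u i < u (Suc i)" using u[of i] u[of "Suc i"] by force
  qed
  have u2: "0 < u 0" using u[of 0] by (simp add: p_def)
  have u3: "u (Suc n) < 1" using u[of "Suc n"] by (simp add: p_def)
  have u4: "\<forall>i\<le>Suc n. poly (QL (Suc (Suc n))) (u i) = 0" using u by blast
  have u5: "\<forall>i<Suc n. u i < s i \<and> s i < u (Suc i) \<and> poly (QL (Suc n)) (s i) = 0"
  proof (intro allI impI)
    fix i assume i: "i < Suc n"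
    show "u i < s i \<and> s i < u (Suc i) \<and> poly (QL (Suc n)) (s i) = 0"
      using u[of i] u[of "Suc i"] i sroot by (simp add: p_def)
  qed
  have u7: "\<forall>i<Suc n. (-1)^(Suc i) * poly (QL (Suc (Suc n))) (s i) > 0"
    using a by simp
  have u6: "\<forall>i\<le>Suc n. (-1)^i * poly (QL (Suc n)) (u i) > 0"
  proof (intro allI impI)
    fix i assume i: "i \<le> Suc n"
    define q where "q = (if i = 0 then 0 else if i \<le> n then r (i - 1) else 1)"
    have qsign: "(-1)^i * poly (QL (Suc n)) q > 0"
    proof -
      consider "i = 0" | "0 < i" "i \<le> n" | "i = Suc n" using i by (metis le_SucE neq0_conv)
      then show ?thesis
      proof cases
        case 1 then show ?thesis by (simp add: q_def QL_zero)
      next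
        case 2
        then obtain k where "i = Suc k" "k < n" by (metis Suc_le_eq gr0_implies_Suc)
        then show ?thesis using rsign by (simp add: q_def)
      next
        case 3 then show ?thesis by (simp add: q_def QL_one)
      qed
    qed
    have qin: "p i \<le> q \<and> q \<le> p (Suc i)"
    proof -
      consider "i = 0" | "0 < i" "i \<le> n" | "i = Suc n" using i by (metis le_SucE neq0_conv)
      then show ?thesis
      proof cases
        case 1 then show ?thesis using s0 by (simp add: q_def p_def)
      next
        case 2
        then obtain k where "i = Suc k" "k < n" by (metis Suc_le_eq gr0_implies_Suc)
        then show ?thesis using rint by (auto simp: q_def p_def intro: less_imp_le)
      next
        case 3 then show ?thesis using sn by (simp add: q_def p_def)
      qed
    qed
    have noroot: "\<forall>x. p i < x \<and> x < p (Suc i) \<longrightarrow> poly (QL (Suc n)) x \<noteq> 0"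
    proof (intro allI impI)
      fix x assume x: "p i < x \<and> x < p (Suc i)"
      show "poly (QL (Suc n)) x \<noteq> 0"
      proof
        assume "poly (QL (Suc n)) x = 0"
        then obtain j where j: "j \<le> n" "x = s j" using allr by blast
        show False
        proof (cases "j < i")
          case True
          then have "i \<noteq> 0" by simp
          then have "p i = s (i - 1)" using i by (simp add: p_def)
          moreover have "s j \<le> s (i - 1)" using mono_steps_le[OF smono, of j "i - 1"] True i by simp
          ultimately show False using x j by simp
        next
          case False
          then have "i \<le> n" using j by simp
          then have "p (Suc i) = s i" by (simp add: p_def)
          moreover have "s i \<le> s j" using mono_steps_le[OF smono, of i j] False j by simp
          ultimately show False using x j by simp
        qed
      qed
    qed
    have uin: "p i < u i \<and> u i < p (Suc i)" using u[OF i] by simp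
    have unz: "poly (QL (Suc n)) (u i) \<noteq> 0" using noroot uin by blast
    have qnz: "poly (QL (Suc n)) q \<noteq> 0" using qsign by auto
    have "poly (QL (Suc n)) (u i) * poly (QL (Suc n)) q > 0"
      by (rule same_sign[OF noroot]) (use uin qin unz qnz in auto)
    then have "((-1)^i * poly (QL (Suc n)) (u i)) * ((-1)^i * poly (QL (Suc n)) q) > 0"
      by (simp add: algebra_simps flip: power_add mult_2)
    then show "(-1)^i * poly (QL (Suc n)) (u i) > 0"
      using qsign by (simp add: zero_less_mult_iff)
  qed
  have "Inv (Suc n) s u" unfolding Inv_def
    using u1 u2 u3 u4 u5 u6 u7 by (simp only: Suc_eq_plus1[symmetric])
  then show ?thesis by blast
qed



lemma Inv_all: "\<exists>r s. Inv n r s"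
proof (induction n)
  case 0 then show ?case by (rule Inv_base)
next
  case (Suc n)
  then obtain r s where "Inv n r s" by blast
  from Inv_step[OF this] show ?case by blast
qed

lemma mono_steps2:
  fixes f :: "nat \<Rightarrow> real"
  assumes "\<forall>i. Suc i < k \<longrightarrow> f i < f (Suc i)" "i < j" "j < k"
  shows "f i < f j"
  using assms(2,3)
proof (induction j)
  case 0 then show ?case by simp
next
  case (Suc j)
  show ?case
  proof (cases "i = j")
    case True then show ?thesis using assms(1) Suc.prems by simp
  next
    case False
    then have "f i < f j" using Suc by simp
    also have "f j < f (Suc j)" using assms(1) Suc.prems by simp
    finally show ?thesis .
  qed
qed

lemma sorted_map_upt2:
  fixes f :: "nat \<Rightarrow> real"
  assumes "\<forall>i. Suc i < k \<longrightarrow> f i < f (Suc i)"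
  shows "sorted_wrt (<) (map f [0..<k])"
  unfolding sorted_wrt_iff_nth_less using mono_steps2[OF assms] by (auto simp del: upt_Suc)

theorem theorem5p3:
  fixes n :: nat
  shows "(\<forall>z::complex. poly (map_poly complex_of_real (QL n)) z = 0 \<longrightarrow>
            z \<in> \<real> \<and> 0 < Re z \<and> Re z < 1)
         \<and> strictly_interlace (QL n) (QL (Suc n))"
proof -
  obtain r s where inv: "Inv n r s" using Inv_all by blast
  have smono: "\<forall>i<n. s i < s (Suc i)" and s0: "0 < s 0" and sn: "s n < 1"
    and sroot: "\<forall>i\<le>n. poly (QL (Suc n)) (s i) = 0"
    and rint: "\<forall>i<n. s i < r i \<and> r i < s (Suc i) \<and> poly (QL n) (r i) = 0"
    using inv unfolding Inv_def by blast+
  have s_pos: "0 < s i" if "i \<le> n" for i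
    using s0 mono_steps_le[OF smono, of 0 i] that by simp
  have s_lt1: "s i < 1" if "i \<le> n" for i
    using sn mono_steps_le[OF smono, of i n] that by simp
  have r01: "0 < r i \<and> r i < 1" if "i < n" for i
    using s_pos[of i] s_lt1[of "Suc i"] rint that by force
  have rmono: "\<forall>i. Suc i < n \<longrightarrow> r i < r (Suc i)"
    using rint by (metis Suc_lessD order.strict_trans)
  define rs where "rs = map r [0..<n]"
  define ss where "ss = map s [0..<Suc n]"
  have rs_sorted: "sorted_wrt (<) rs" unfolding rs_def by (rule sorted_map_upt2[OF rmono])
  have ss_sorted: "sorted_wrt (<) ss" unfolding ss_def by (rule sorted_map_upt[OF smono])
  have rs_set: "set rs = r ` {..<n}" unfolding rs_def by (simp add: atLeast0LessThan)
  have ss_set: "set ss = s ` {..n}" unfolding ss_def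
    by (simp add: atLeast0LessThan lessThan_Suc_atMost del: upt_Suc)
  have Rn: "(\<forall>x. poly (QL n) x = 0 \<longleftrightarrow> x \<in> set rs) \<and> (\<forall>x\<in>set rs. order x (QL n) = 1)"
    using roots_all[OF QL_nz, of rs n] rs_sorted rint
    by (simp add: strict_sorted_iff degree_QL rs_def)
  have Sn: "(\<forall>x. poly (QL (Suc n)) x = 0 \<longleftrightarrow> x \<in> set ss) \<and> (\<forall>x\<in>set ss. order x (QL (Suc n)) = 1)"
  proof -
    have "length ss = Suc n" unfolding ss_def by (simp del: upt_Suc)
    then show ?thesis
      using roots_all[OF QL_nz, of ss "Suc n"] ss_sorted sroot
      by (simp add: strict_sorted_iff degree_QL ss_set)
  qed
  have g1: "degree (QL (Suc n)) = degree (QL n) + 1" by (simp add: degree_QL)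
  have g2: "length rs = degree (QL n)" by (simp add: rs_def degree_QL)
  have g3: "length ss = degree (QL (Suc n))" unfolding ss_def degree_QL by (simp del: upt_Suc)
  have g6: "set rs = {x. poly (QL n) x = 0}" using Rn by auto
  have g7: "set ss = {x. poly (QL (Suc n)) x = 0}" using Sn by auto
  have g8: "\<forall>x\<in>set rs. order x (QL n) = 1" using Rn by blast
  have g9: "\<forall>x\<in>set ss. order x (QL (Suc n)) = 1" using Sn by blast
  have g10: "\<forall>i<length rs. ss ! i < rs ! i \<and> rs ! i < ss ! (i + 1)"
  proof (intro allI impI)
    fix i assume "i < length rs"
    then have i: "i < n" by (simp add: rs_def)
    have "ss ! i = s i" unfolding ss_def using i by (simp del: upt_Suc)
    moreover have "ss ! (i+1) = s (Suc i)" unfolding ss_def using i by (simp del: upt_Suc)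
    moreover have "rs ! i = r i" unfolding rs_def using i by simp
    ultimately show "ss ! i < rs ! i \<and> rs ! i < ss ! (i + 1)" using rint i by simp
  qed
  have interl: "strictly_interlace (QL n) (QL (Suc n))"
    unfolding strictly_interlace_def
    using g1 g2 g3 rs_sorted ss_sorted g6 g7 g8 g9 g10 by blast
  define cp where "cp = map_poly complex_of_real (QL n)"
  define crs where "crs = map complex_of_real rs"
  have cp0: "poly cp 0 = 1" unfolding cp_def
    using poly_of_real_map[of "QL n" 0] by (simp add: QL_zero)
  then have cpnz: "cp \<noteq> 0" by auto
  have dcp: "degree cp = n" unfolding cp_def by (subst degree_map_poly) (auto simp: degree_QL)
  have crs_dist: "distinct crs" unfolding crs_def using rs_sorted
    by (simp add: strict_sorted_iff distinct_map inj_on_def)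
  have crs_root: "\<forall>z\<in>set crs. poly cp z = 0"
    unfolding crs_def cp_def using Rn by (auto simp: poly_of_real_map)
  have CR: "\<forall>z. poly cp z = 0 \<longleftrightarrow> z \<in> set crs"
    using roots_all[OF cpnz crs_dist _ crs_root] dcp by (simp add: crs_def rs_def)
  have cplx: "\<forall>z::complex. poly (map_poly complex_of_real (QL n)) z = 0 \<longrightarrow> z \<in> \<real> \<and> 0 < Re z \<and> Re z < 1"
  proof (intro allI impI)
    fix z :: complex assume "poly (map_poly complex_of_real (QL n)) z = 0"
    then have "z \<in> set crs" using CR unfolding cp_def by blast
    then obtain i where i: "i < n" "z = complex_of_real (r i)" unfolding crs_def rs_def by auto
    then show "z \<in> \<real> \<and> 0 < Re z \<and> Re z < 1" using r01[OF i(1)] by simp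
  qed
  show ?thesis using cplx interl by blast
qed


end
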